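(* Let $U$ be a finite ground set with $|U|=n$, partitioned as $\mathcal{P}=\{U_1,\dots,U_N\}$, let $f:2^U\to\mathbb{R}_{\ge0}$ be monotone submodular, and consider an FSM instance with budget $\kappa$ and bounds $\vec l,\vec u$; let $OPT=\arg\max_{S\in\mathcal{M}_{fair}(\mathcal{P},\kappa,\vec l,\vec u)}f(S)$. Let $\varepsilon\in(0,1)$ and let $\mathcal{M}_{1/\varepsilon}=\{S\subseteq U:|S\cap U_c|\le u_c/\varepsilon\ \forall c,\ \sum_c\max\{|S\cap U_c|,l_c/\varepsilon\}\le\kappa/\varepsilon\}$. Run the algorithm greedy-fairness-bi: start with $S=\emptyset$; while there exists $x\in U\setminus S$ with $S\cup\{x\}\in\mathcal{M}_{1/\varepsilon}$, add to $S$ an element $x$ maximizing $f(S\cup\{x\})-f(S)$ among such elements; output $S$. Then the output $S$ satisfies a $(1-\varepsilon,\frac1\varepsilon)$-bicriteria approximation guarantee, i.e. $f(S)\ge(1-\varepsilon)f(OPT)$, $|S\cap U_c|\le u_c/\varepsilon$ for all $c$, and $\sum_c\max\{|S\cap U_c|,l_c/\varepsilon\}\le\kappa/\varepsilon$; and the algorithm uses at most $O(n\kappa/\varepsilon)$ queries of $f$.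
   Context: Fairness matroid: $\mathcal{M}_{fair}(\mathcal{P},\kappa,\vec l,\vec u)=\{S\subseteq U: |S\cap U_c|\le u_c\ \forall c\in[N],\ \sum_{c\in[N]}\max\{|S\cap U_c|,l_c\}\le\kappa\}$. FSM: maximize $f(S)$ over $S\in\mathcal{M}_{fair}(\mathcal{P},\kappa,\vec l,\vec u)$, where it is assumed that $\sum_c u_c\ge\kappa$. *)

theory Defs
  imports Complex_Main
begin

text \<open>With integer bounds this is
  M_fair(P, kappa, l, u); with bounds divided by eps it is M_{1/eps}.\<close>
definition fair_sets ::
  "'a set \<Rightarrow> nat \<Rightarrow> (nat \<Rightarrow> 'a set) \<Rightarrow> real \<Rightarrow> (nat \<Rightarrow> real) \<Rightarrow> (nat \<Rightarrow> real) \<Rightarrow> 'a set set" where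
  "fair_sets U N Uc k l u =
     {S. S \<subseteq> U \<and> (\<forall>c<N. real (card (S \<inter> Uc c)) \<le> u c)
         \<and> (\<Sum>c<N. max (real (card (S \<inter> Uc c))) (l c)) \<le> k}"

definition is_partition :: "'a set \<Rightarrow> nat \<Rightarrow> (nat \<Rightarrow> 'a set) \<Rightarrow> bool" where
  "is_partition U N Uc \<longleftrightarrow>
     (\<Union>c<N. Uc c) = U \<and> (\<forall>c<N. Uc c \<noteq> {}) \<and>
     (\<forall>c<N. \<forall>d<N. c \<noteq> d \<longrightarrow> Uc c \<inter> Uc d = {})"

definition monotone_submodular :: "'a set \<Rightarrow> ('a set \<Rightarrow> real) \<Rightarrow> bool" where
  "monotone_submodular U f \<longleftrightarrow>
     (\<forall>A B. A \<subseteq> B \<and> B \<subseteq> U \<longrightarrow> f A \<le> f B) \<and>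
     (\<forall>A B x. A \<subseteq> B \<and> B \<subseteq> U \<and> x \<in> U - B \<longrightarrow>
        f (insert x B) - f B \<le> f (insert x A) - f A)"

text \<open>A complete run of the greedy algorithm over constraint family M:
  xs lists the elements added, in order; the set before step i is set (take i xs).
  The output is set xs.\<close>
definition greedy_run :: "'a set \<Rightarrow> 'a set set \<Rightarrow> ('a set \<Rightarrow> real) \<Rightarrow> 'a list \<Rightarrow> bool" where
  "greedy_run U M f xs \<longleftrightarrow>
     (\<forall>i<length xs.
        xs ! i \<in> U - set (take i xs) \<and>
        insert (xs ! i) (set (take i xs)) \<in> M \<and>
        (\<forall>y\<in>U - set (take i xs). insert y (set (take i xs)) \<in> M \<longrightarrow>
           f (insert y (set (take i xs))) - f (set (take i xs))
             \<le> f (insert (xs ! i) (set (take i xs))) - f (set (take i xs)))) \<and>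
     \<not> (\<exists>x\<in>U - set xs. insert x (set xs) \<in> M)"

text \<open>Number of value queries of f made by the run: in iteration i the algorithm
  evaluates f(S) and f(S \<union> {x}) for the candidates x \<in> U - S (an upper bound on
  the candidates actually examined).\<close>
definition greedy_queries :: "'a set \<Rightarrow> 'a list \<Rightarrow> nat" where
  "greedy_queries U xs = (\<Sum>i<length xs. card (U - set (take i xs)) + 1)"

end

theory Submission
  imports Defs
begin

lemma fair_sets_mono:
  assumes "A \<in> fair_sets U N Uc k l u" "B \<subseteq> A" "finite U"
  shows "B \<in> fair_sets U N Uc k l u"
proof -
  have AU: "A \<subseteq> U" using assms(1) by (simp add: fair_sets_def)
  hence finA: "finite A" using assms(3) finite_subset by blast
  have c: "card (B \<inter> Uc c) \<le> card (A \<inter> Uc c)" for c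
    by (rule card_mono) (use finA assms(2) in auto)
  have s1: "(\<Sum>c<N. max (real (card (B \<inter> Uc c))) (l c)) \<le> (\<Sum>c<N. max (real (card (A \<inter> Uc c))) (l c))"
    apply (rule sum_mono) apply (rule max.mono) using c by auto
  have s2: "(\<Sum>c<N. max (real (card (A \<inter> Uc c))) (l c)) \<le> k"
    using assms(1) by (simp add: fair_sets_def)
  have cap: "real (card (B \<inter> Uc c)) \<le> u c" if "c < N" for c
  proof -
    have "real (card (A \<inter> Uc c)) \<le> u c" using assms(1) that by (simp add: fair_sets_def)
    moreover have "real (card (B \<inter> Uc c)) \<le> real (card (A \<inter> Uc c))" using c[of c] by simp
    ultimately show ?thesis by linarith
  qed
  have "B \<subseteq> U" using AU assms(2) by blast
  then show ?thesis unfolding fair_sets_def mem_Collect_eq using cap s1 s2 by auto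
qed

lemma card_partition:
  assumes "is_partition U N Uc" "finite U" "A \<subseteq> U"
  shows "card A = (\<Sum>c<N. card (A \<inter> Uc c))"
proof -
  have "A = (\<Union>c<N. A \<inter> Uc c)" using assms(1,3) unfolding is_partition_def by blast
  hence "card A = card (\<Union>c<N. A \<inter> Uc c)" by simp
  also have "\<dots> = (\<Sum>c<N. card (A \<inter> Uc c))"
    apply (rule card_UN_disjoint)
    using assms finite_subset unfolding is_partition_def by blast+
  finally show ?thesis .
qed

lemma submod_sum:
  assumes ms: "monotone_submodular U f" and "finite A" "A \<subseteq> U" "S \<subseteq> U"
  shows "f (S \<union> A) \<le> f S + (\<Sum>a\<in>A - S. f (insert a S) - f S)"
  using assms(2,3)
proof (induction A rule: finite_induct)
  case empty
  then show ?case by simp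
next
  case (insert x F)
  show ?case
  proof (cases "x \<in> S")
    case True
    then have "S \<union> insert x F = S \<union> F" "insert x F - S = F - S" by auto
    then show ?thesis using insert by simp
  next
    case False
    have ms2: "\<forall>A B x. A \<subseteq> B \<and> B \<subseteq> U \<and> x \<in> U - B \<longrightarrow> f (insert x B) - f B \<le> f (insert x A) - f A"
      using ms unfolding monotone_submodular_def by (rule conjunct2)
    have h1: "S \<subseteq> S \<union> F" by blast
    have h2: "S \<union> F \<subseteq> U" using insert.prems assms(4) by blast
    have h3: "x \<in> U - (S \<union> F)" using insert.prems insert.hyps False by blast
    have sub: "f (insert x (S \<union> F)) - f (S \<union> F) \<le> f (insert x S) - f S"
      using ms2 h1 h2 h3 by blast
    have "insert x F - S = insert x (F - S)" using False by auto
    moreover have "x \<notin> F - S" using insert by auto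
    moreover have "finite (F - S)" using insert by auto
    ultimately have "(\<Sum>a\<in>insert x F - S. f (insert a S) - f S) = (f (insert x S) - f S) + (\<Sum>a\<in>F - S. f (insert a S) - f S)"
      by simp
    moreover have "S \<union> insert x F = insert x (S \<union> F)" by auto
    ultimately show ?thesis using insert sub by simp
  qed
qed

lemma tel: "(\<Sum>j<n. (D j - D (Suc j)) * real (Suc j)) = (\<Sum>j<n. D j) - real n * D n"
  by (induction n) (auto simp: algebra_simps)

lemma layer_cake:
  fixes \<delta> :: "nat \<Rightarrow> real" and \<tau> :: "'b \<Rightarrow> nat" and r :: real
  assumes finB: "finite B" and tau: "\<forall>b\<in>B. 1 \<le> \<tau> b \<and> \<tau> b \<le> m"
    and anti: "\<forall>i. Suc i < m \<longrightarrow> \<delta> (Suc i) \<le> \<delta> i" and nn: "\<forall>i<m. 0 \<le> \<delta> i"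
    and r: "r > 0" and cnt: "\<forall>t\<le>m. r * card {b\<in>B. \<tau> b \<le> t} \<le> t"
  shows "r * (\<Sum>b\<in>B. \<delta> (\<tau> b - 1)) \<le> (\<Sum>i<m. \<delta> i)"
proof -
  define D where "D j = (if j < m then \<delta> j else 0)" for j
  define e where "e j = D j - D (Suc j)" for j
  have e0: "e j \<ge> 0" for j
  proof (cases "Suc j < m")
    case True then show ?thesis using anti unfolding e_def D_def by auto
  next
    case False then show ?thesis using nn unfolding e_def D_def by auto
  qed
  have one: "\<delta> (\<tau> b - 1) = (\<Sum>j<m. if \<tau> b \<le> Suc j then e j else 0)" if "b \<in> B" for b
  proof -
    have t: "1 \<le> \<tau> b" "\<tau> b \<le> m" using tau that by auto
    have "(\<Sum>j<m. if \<tau> b \<le> Suc j then e j else 0) = (\<Sum>j\<in>{\<tau> b - 1..<m}. e j)"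
      by (rule sum.mono_neutral_cong_right) (use t in auto)
    also have "\<dots> = D (\<tau> b - 1) - D m"
    proof -
      have "(\<Sum>j\<in>{\<tau> b - 1..<m}. e j) = - (\<Sum>j\<in>{\<tau> b - 1..<m}. D (Suc j) - D j)"
        unfolding e_def by (simp add: sum_negf[symmetric])
      also have "\<dots> = D (\<tau> b - 1) - D m" using t by (subst sum_Suc_diff') auto
      finally show ?thesis .
    qed
    also have "\<dots> = \<delta> (\<tau> b - 1)" using t unfolding D_def by auto
    finally show ?thesis by simp
  qed
  have "(\<Sum>b\<in>B. \<delta> (\<tau> b - 1)) = (\<Sum>b\<in>B. \<Sum>j<m. if \<tau> b \<le> Suc j then e j else 0)"
    using one by simp
  also have "\<dots> = (\<Sum>j<m. \<Sum>b\<in>B. if \<tau> b \<le> Suc j then e j else 0)"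
    by (rule sum.swap)
  also have "\<dots> = (\<Sum>j<m. e j * card {b\<in>B. \<tau> b \<le> Suc j})"
    by (rule sum.cong) (auto simp: sum.If_cases finB intro!: arg_cong[where f=card])
  finally have eq: "(\<Sum>b\<in>B. \<delta> (\<tau> b - 1)) = (\<Sum>j<m. e j * card {b\<in>B. \<tau> b \<le> Suc j})" .
  have "r * (\<Sum>j<m. e j * card {b\<in>B. \<tau> b \<le> Suc j}) = (\<Sum>j<m. e j * (r * card {b\<in>B. \<tau> b \<le> Suc j}))"
    by (simp add: sum_distrib_left algebra_simps)
  also have "\<dots> \<le> (\<Sum>j<m. e j * real (Suc j))"
    apply (rule sum_mono)
    subgoal for j using cnt[rule_format, of "Suc j"] e0[of j] by (auto intro!: mult_left_mono)
    done
  also have "\<dots> = (\<Sum>j<m. D j) - real m * D m" unfolding e_def by (rule tel)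
  also have "\<dots> = (\<Sum>i<m. \<delta> i)" unfolding D_def by simp
  finally show ?thesis using eq by simp
qed


lemma count_blocked:
  fixes \<epsilon> :: real and \<kappa> :: nat and l u :: "nat \<Rightarrow> nat"
  assumes part: "is_partition U N Uc" and fin: "finite U" and eps: "0 < \<epsilon>" "\<epsilon> < 1"
  and A: "A \<in> fair_sets U N Uc (real \<kappa> / \<epsilon>) (\<lambda>c. real (l c) / \<epsilon>) (\<lambda>c. real (u c) / \<epsilon>)"
  and Opt: "Opt \<in> fair_sets U N Uc (real \<kappa>) (\<lambda>c. real (l c)) (\<lambda>c. real (u c))"
  and B1: "B \<subseteq> Opt - A"
  and B2: "\<forall>z\<in>B. insert z A \<notin> fair_sets U N Uc (real \<kappa> / \<epsilon>) (\<lambda>c. real (l c) / \<epsilon>) (\<lambda>c. real (u c) / \<epsilon>)"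
  shows "(1 / \<epsilon> - 1) * card B \<le> card A"
proof -
  define r where "r = 1 / \<epsilon> - 1"
  have r0: "r > 0" using eps by (simp add: r_def)
  have inv: "1 / \<epsilon> = r + 1" by (simp add: r_def)
  have dv: "x / \<epsilon> = r * x + x" for x :: real
  proof -
    have "x / \<epsilon> = x * (1 / \<epsilon>)" by simp
    also have "\<dots> = r * x + x" by (simp add: inv algebra_simps)
    finally show ?thesis .
  qed
  define s where "s c = real (card (A \<inter> Uc c))" for c
  define b where "b c = real (card (B \<inter> Uc c))" for c
  define oc where "oc c = real (card (Opt \<inter> Uc c))" for c
  define L where "L c = real (l c) / \<epsilon>" for c
  define Mx where "Mx c = max (oc c) (real (l c)) / \<epsilon>" for c
  have AU: "A \<subseteq> U" using A by (simp add: fair_sets_def)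
  have OU: "Opt \<subseteq> U" using Opt by (simp add: fair_sets_def)
  have BU: "B \<subseteq> U" using B1 OU by auto
  have finO: "finite Opt" using OU fin finite_subset by blast
  have finA: "finite A" using AU fin finite_subset by blast
  have cardA: "real (card A) = (\<Sum>c<N. s c)"
    using card_partition[OF part fin AU] by (simp add: s_def)
  have cardB: "real (card B) = (\<Sum>c<N. b c)"
    using card_partition[OF part fin BU] by (simp add: b_def)
  have b_le_o: "b c \<le> oc c" for c
    unfolding b_def oc_def using B1 finO by (auto intro!: card_mono)
  have o_le_u: "oc c \<le> real (u c)" if "c < N" for c
    using Opt that unfolding fair_sets_def oc_def by auto
  have Asum: "(\<Sum>c<N. max (s c) (L c)) \<le> real \<kappa> / \<epsilon>"
    using A unfolding fair_sets_def s_def L_def by auto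
  have Acap: "s c \<le> real (u c) / \<epsilon>" if "c < N" for c
    using A that unfolding fair_sets_def s_def by auto
  have Osum: "(\<Sum>c<N. max (oc c) (real (l c))) \<le> real \<kappa>"
    using Opt unfolding fair_sets_def oc_def by auto
  have s0: "s c \<ge> 0" for c by (simp add: s_def)
  have b0: "b c \<ge> 0" for c by (simp add: b_def)
  have b1: "b c > 0 \<Longrightarrow> b c \<ge> 1" for c by (simp add: b_def)
  have blocked: "s c + 1 > real (u c) / \<epsilon> \<or>
      (\<Sum>c'<N. max (s c' + (if c' = c then 1 else 0)) (L c')) > real \<kappa> / \<epsilon>"
    if c: "c < N" "b c > 0" for c
  proof -
    have "B \<inter> Uc c \<noteq> {}" using c(2) by (auto simp: b_def)
    then obtain z where z: "z \<in> B" "z \<in> Uc c" by blast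
    have oU: "z \<in> U" and oA: "z \<notin> A" using z B1 OU by auto
    have cnt: "card (insert z A \<inter> Uc c') = card (A \<inter> Uc c') + (if c' = c then 1 else 0)"
      if c': "c' < N" for c'
    proof (cases "c' = c")
      case True
      then have "insert z A \<inter> Uc c' = insert z (A \<inter> Uc c')" using z by auto
      then show ?thesis using True oA finA by simp
    next
      case False
      have disj: "\<forall>c<N. \<forall>d<N. c \<noteq> d \<longrightarrow> Uc c \<inter> Uc d = {}"
        using part unfolding is_partition_def by (elim conjE)
      then have "Uc c \<inter> Uc c' = {}" using False c' c by auto
      then have "z \<notin> Uc c'" using z by blast
      then have "insert z A \<inter> Uc c' = A \<inter> Uc c'" by auto
      then show ?thesis using False by simp
    qed
    have notin: "insert z A \<notin> fair_sets U N Uc (real \<kappa> / \<epsilon>) (\<lambda>c. real (l c) / \<epsilon>) (\<lambda>c. real (u c) / \<epsilon>)"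
      using B2 z by auto
    have sub: "insert z A \<subseteq> U" using oU AU by auto
    have eqsum: "(\<Sum>c'<N. max (real (card (insert z A \<inter> Uc c'))) (real (l c') / \<epsilon>))
        = (\<Sum>c'<N. max (s c' + (if c' = c then 1 else 0)) (L c'))"
      by (rule sum.cong) (auto simp: cnt s_def L_def)
    from notin sub have "(\<exists>c'<N. real (card (insert z A \<inter> Uc c')) > real (u c') / \<epsilon>) \<or>
        (\<Sum>c'<N. max (real (card (insert z A \<inter> Uc c'))) (real (l c') / \<epsilon>)) > real \<kappa> / \<epsilon>"
      unfolding fair_sets_def by (auto simp: not_le)
    then show ?thesis
    proof
      assume "\<exists>c'<N. real (card (insert z A \<inter> Uc c')) > real (u c') / \<epsilon>"
      then obtain c' where c': "c' < N" "real (card (insert z A \<inter> Uc c')) > real (u c') / \<epsilon>" by blast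
      show ?thesis
      proof (cases "c' = c")
        case True then show ?thesis using c' cnt[of c'] by (simp add: s_def)
      next
        case False then show ?thesis using c' cnt[of c'] Acap[of c'] by (simp add: s_def)
      qed
    next
      assume "(\<Sum>c'<N. max (real (card (insert z A \<inter> Uc c'))) (real (l c') / \<epsilon>)) > real \<kappa> / \<epsilon>"
      then show ?thesis using eqsum by simp
    qed
  qed
  have bud_imp: "s c + 1 > L c"
    if c: "c < N" and gt: "(\<Sum>c'<N. max (s c' + (if c' = c then 1 else 0)) (L c')) > real \<kappa> / \<epsilon>" for c
  proof (rule ccontr)
    assume "\<not> s c + 1 > L c"
    then have "(\<Sum>c'<N. max (s c' + (if c' = c then 1 else 0)) (L c')) = (\<Sum>c'<N. max (s c') (L c'))"
      by (intro sum.cong) auto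
    then show False using gt Asum by simp
  qed
  have Mx_ge: "Mx c \<ge> L c" "Mx c \<ge> r * oc c + oc c" "Mx c \<ge> 0" for c
  proof -
    show "Mx c \<ge> L c" unfolding Mx_def L_def using eps by (intro divide_right_mono) auto
    have "Mx c \<ge> oc c / \<epsilon>" unfolding Mx_def using eps by (intro divide_right_mono) auto
    then show "Mx c \<ge> r * oc c + oc c" using dv by simp
    show "Mx c \<ge> 0" unfolding Mx_def oc_def using eps by auto
  qed
  have rb: "r * b c \<le> r * oc c" for c using r0 b_le_o by (simp add: mult_left_mono)
  have ru: "r * b c \<le> s c" if "c < N" "b c > 0" "s c + 1 > real (u c) / \<epsilon>" for c
  proof -
    have "oc c \<ge> 1" using b1[of c] b_le_o[of c] that by simp
    then have "u c \<ge> 1" using o_le_u[of c] that by simp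
    have "r * oc c \<le> r * u c" using o_le_u[of c] that r0 by (simp add: mult_left_mono)
    moreover have "real (u c) / \<epsilon> = r * u c + u c" by (rule dv)
    ultimately show ?thesis using rb[of c] that \<open>u c \<ge> 1\<close> by linarith
  qed
  have MxSum: "(\<Sum>c<N. Mx c) \<le> real \<kappa> / \<epsilon>"
  proof -
    have "(\<Sum>c<N. Mx c) = (\<Sum>c<N. max (oc c) (real (l c))) / \<epsilon>"
      unfolding Mx_def by (simp add: sum_divide_distrib)
    also have "\<dots> \<le> real \<kappa> / \<epsilon>" using Osum eps by (intro divide_right_mono) auto
    finally show ?thesis .
  qed
  have main: "r * (\<Sum>c<N. b c) \<le> (\<Sum>c<N. s c)"
  proof (cases "\<exists>d<N. b d > 0 \<and> (\<Sum>c'<N. max (s c' + (if c' = d then 1 else 0)) (L c')) > real \<kappa> / \<epsilon>")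
    case True
    then obtain d where d: "d < N" "b d > 0"
      "(\<Sum>c'<N. max (s c' + (if c' = d then 1 else 0)) (L c')) > real \<kappa> / \<epsilon>" by blast
    have sd: "s d + 1 > L d" using bud_imp d by blast
    have per: "max (s c + (if c = d then 1 else 0)) (L c) - Mx c \<le> s c - r * b c" if c: "c < N" for c
    proof (cases "c = d")
      case True
      have "b c \<ge> 1" using b1 d True by simp
      then show ?thesis using True sd Mx_ge[of c] rb[of c] b_le_o[of c] by (simp add: max_def)
    next
      case False
      show ?thesis
      proof (cases "b c > 0")
        case False': False
        then have "b c = 0" using b0[of c] by linarith
        then show ?thesis using False Mx_ge[of c] s0[of c] by (simp add: max_def)
      next
        case True
        have bc1: "b c \<ge> 1" using b1 True by simp
        show ?thesis
        proof (cases "s c \<ge> L c")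
          case ge: True
          then show ?thesis using False Mx_ge[of c] rb[of c] b_le_o[of c] b0[of c] by (simp add: max_def)
        next
          case lt: False
          from blocked[OF c True] show ?thesis
          proof
            assume cap: "s c + 1 > real (u c) / \<epsilon>"
            show ?thesis using ru[OF c True cap] False lt Mx_ge[of c] by (simp add: max_def)
          next
            assume "(\<Sum>c'<N. max (s c' + (if c' = c then 1 else 0)) (L c')) > real \<kappa> / \<epsilon>"
            then have "s c + 1 > L c" using bud_imp c by blast
            then show ?thesis using False lt Mx_ge[of c] rb[of c] b_le_o[of c] bc1 by (simp add: max_def)
          qed
        qed
      qed
    qed
    have "(\<Sum>c<N. max (s c + (if c = d then 1 else 0)) (L c) - Mx c) \<le> (\<Sum>c<N. s c - r * b c)"
      by (rule sum_mono) (use per in auto)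
    then have "(\<Sum>c<N. max (s c + (if c = d then 1 else 0)) (L c)) - (\<Sum>c<N. Mx c) \<le> (\<Sum>c<N. s c) - r * (\<Sum>c<N. b c)"
      by (simp add: sum_subtractf sum_distrib_left)
    then show ?thesis using d(3) MxSum by linarith
  next
    case False
    have "r * b c \<le> s c" if c: "c < N" for c
    proof (cases "b c > 0")
      case True
      with False c have "\<not> (\<Sum>c'<N. max (s c' + (if c' = c then 1 else 0)) (L c')) > real \<kappa> / \<epsilon>" by blast
      then have "s c + 1 > real (u c) / \<epsilon>" using blocked[OF c True] by blast
      then show ?thesis using ru[OF c True] by blast
    next
      case False
      then have "b c = 0" using b0[of c] by linarith
      then show ?thesis using s0[of c] by simp
    qed
    then have "(\<Sum>c<N. r * b c) \<le> (\<Sum>c<N. s c)" by (intro sum_mono) auto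
    then show ?thesis by (simp add: sum_distrib_left)
  qed
  show ?thesis using main cardA cardB by (simp add: r_def)
qed


lemma main_lemma:
  fixes U :: "'a set" and N :: nat and Uc :: "nat \<Rightarrow> 'a set" and \<kappa> :: nat
    and l u :: "nat \<Rightarrow> nat" and f :: "'a set \<Rightarrow> real" and \<epsilon> :: real and xs :: "'a list"
  assumes fin: "finite U" and part: "is_partition U N Uc" and ms: "monotone_submodular U f"
    and fnn: "\<forall>S\<subseteq>U. f S \<ge> 0"
    and ne: "fair_sets U N Uc (real \<kappa>) (\<lambda>c. real (l c)) (\<lambda>c. real (u c)) \<noteq> {}"
    and eps: "0 < \<epsilon>" "\<epsilon> < 1"
    and gr: "greedy_run U (fair_sets U N Uc (real \<kappa> / \<epsilon>) (\<lambda>c. real (l c) / \<epsilon>) (\<lambda>c. real (u c) / \<epsilon>)) f xs"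
  shows "(\<forall>T \<in> fair_sets U N Uc (real \<kappa>) (\<lambda>c. real (l c)) (\<lambda>c. real (u c)).
           f (set xs) \<ge> (1 - \<epsilon>) * f T) \<and>
       (\<forall>c<N. real (card (set xs \<inter> Uc c)) \<le> real (u c) / \<epsilon>) \<and>
       (\<Sum>c<N. max (real (card (set xs \<inter> Uc c))) (real (l c) / \<epsilon>)) \<le> real \<kappa> / \<epsilon> \<and>
       real (greedy_queries U xs) \<le> 2 * real (card U) * real \<kappa> / \<epsilon>"
proof -
  define M where "M = fair_sets U N Uc (real \<kappa> / \<epsilon>) (\<lambda>c. real (l c) / \<epsilon>) (\<lambda>c. real (u c) / \<epsilon>)"
  define M0 where "M0 = fair_sets U N Uc (real \<kappa>) (\<lambda>c. real (l c)) (\<lambda>c. real (u c))"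
  define m where "m = length xs"
  define S where "S i = set (take i xs)" for i
  have g1: "\<forall>i<m. xs ! i \<in> U - S i \<and> insert (xs ! i) (S i) \<in> M \<and>
      (\<forall>y\<in>U - S i. insert y (S i) \<in> M \<longrightarrow>
         f (insert y (S i)) - f (S i) \<le> f (insert (xs ! i) (S i)) - f (S i))"
    using gr unfolding greedy_run_def M_def m_def S_def by (rule conjunct1)
  have g2: "\<not> (\<exists>x\<in>U - set xs. insert x (set xs) \<in> M)"
    using gr unfolding greedy_run_def M_def by (rule conjunct2)
  have Sstep: "S (Suc i) = insert (xs ! i) (S i)" if "i < m" for i
    using that by (simp add: S_def m_def take_Suc_conv_app_nth)
  have setU: "set xs \<subseteq> U"
  proof
    fix x assume "x \<in> set xs"
    then obtain i where "i < m" "x = xs ! i" by (auto simp: in_set_conv_nth m_def)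
    then have "xs ! i \<in> U - S i" using g1 by blast
    then show "x \<in> U" using \<open>x = xs ! i\<close> by blast
  qed
  have SU: "S i \<subseteq> U" for i using setU set_take_subset[of i xs] unfolding S_def by (rule order_trans[rotated])
  have Smono: "S i \<subseteq> S j" if "i \<le> j" for i j
    using that by (simp add: S_def set_take_subset_set_take)
  have Sm: "S m = set xs" by (simp add: S_def m_def)
  have S0: "S 0 = {}" by (simp add: S_def)
  have emptyM: "{} \<in> M"
  proof -
    obtain T where T: "T \<in> M0" using ne unfolding M0_def by blast
    have "(\<Sum>c<N. real (l c)) \<le> (\<Sum>c<N. max (real (card (T \<inter> Uc c))) (real (l c)))"
      by (rule sum_mono) simp
    also have "\<dots> \<le> real \<kappa>" using T unfolding M0_def fair_sets_def by auto
    finally have "(\<Sum>c<N. real (l c)) / \<epsilon> \<le> real \<kappa> / \<epsilon>" using eps by (intro divide_right_mono) auto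
    then have "(\<Sum>c<N. max 0 (real (l c) / \<epsilon>)) \<le> real \<kappa> / \<epsilon>"
      using eps by (simp add: sum_divide_distrib)
    then show ?thesis unfolding M_def fair_sets_def using eps by simp
  qed
  have SM: "S i \<in> M" if "i \<le> m" for i
  proof (cases i)
    case 0 then show ?thesis using S0 emptyM by simp
  next
    case (Suc j) then show ?thesis using that Sstep[of j] g1 by auto
  qed
  have nthS: "xs ! i \<in> S j" if "i < j" "j \<le> m" for i j
  proof -
    have "take j xs ! i = xs ! i" using that by simp
    moreover have "i < length (take j xs)" using that by (simp add: m_def)
    ultimately show ?thesis unfolding S_def by (metis nth_mem)
  qed
  have dist: "distinct xs"
    unfolding distinct_conv_nth
  proof (intro allI impI)
    fix i j assume ij: "i < length xs" "j < length xs" "i \<noteq> j"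
    show "xs ! i \<noteq> xs ! j"
    proof (cases "i < j")
      case True
      then show ?thesis using nthS[of i j] g1 ij by (auto simp: m_def)
    next
      case False
      then have "j < i" using ij by simp
      then show ?thesis using nthS[of j i] g1 ij by (auto simp: m_def)
    qed
  qed
  have cardS: "card (S i) = i" if "i \<le> m" for i
    using that dist unfolding S_def m_def by (simp add: distinct_card)
  define \<delta> where "\<delta> i = f (S (Suc i)) - f (S i)" for i
  have ms1: "\<forall>A B. A \<subseteq> B \<and> B \<subseteq> U \<longrightarrow> f A \<le> f B"
    using ms unfolding monotone_submodular_def by (rule conjunct1)
  have ms2: "\<forall>A B x. A \<subseteq> B \<and> B \<subseteq> U \<and> x \<in> U - B \<longrightarrow> f (insert x B) - f B \<le> f (insert x A) - f A"
    using ms unfolding monotone_submodular_def by (rule conjunct2)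
  have fmono: "f A \<le> f B" if "A \<subseteq> B" "B \<subseteq> U" for A B
    using ms1 that by blast
  have fsub: "f (insert x B) - f B \<le> f (insert x A) - f A" if "A \<subseteq> B" "B \<subseteq> U" "x \<in> U - B" for A B x
    using ms2 that by blast
  have \<delta>_nn: "\<forall>i<m. 0 \<le> \<delta> i"
    unfolding \<delta>_def using fmono Smono SU by (simp add: Smono)
  have \<delta>_anti: "\<forall>i. Suc i < m \<longrightarrow> \<delta> (Suc i) \<le> \<delta> i"
  proof (intro allI impI)
    fix i assume i: "Suc i < m"
    define x where "x = xs ! Suc i"
    have x1: "x \<in> U - S (Suc i)" using g1 i unfolding x_def by blast
    have x2: "x \<in> U - S i" using x1 Smono[of i "Suc i"] by auto
    have "insert x (S i) \<subseteq> S (Suc (Suc i))" using Sstep[of "Suc i"] Sstep[of i] i unfolding x_def by auto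
    then have "insert x (S i) \<in> M" using SM[of "Suc (Suc i)"] i fair_sets_mono fin unfolding M_def by fastforce
    then have a: "f (insert x (S i)) - f (S i) \<le> \<delta> i"
      using g1 i x2 Sstep[of i] unfolding \<delta>_def by auto
    have b: "f (insert x (S (Suc i))) - f (S (Suc i)) \<le> f (insert x (S i)) - f (S i)"
      using fsub[of "S i" "S (Suc i)" x] Smono[of i "Suc i"] SU x1 by auto
    have "\<delta> (Suc i) = f (insert x (S (Suc i))) - f (S (Suc i))"
      unfolding \<delta>_def x_def using Sstep[of "Suc i"] i by simp
    then show "\<delta> (Suc i) \<le> \<delta> i" using a b by simp
  qed
  have telesc: "(\<Sum>i<m. \<delta> i) = f (S m) - f (S 0)"
    unfolding \<delta>_def by (rule sum_lessThan_telescope)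
  have SmM: "set xs \<in> M" using SM[of m] Sm by simp
  have feas1: "\<forall>c<N. real (card (set xs \<inter> Uc c)) \<le> real (u c) / \<epsilon>"
    using SmM unfolding M_def fair_sets_def by auto
  have feas2: "(\<Sum>c<N. max (real (card (set xs \<inter> Uc c))) (real (l c) / \<epsilon>)) \<le> real \<kappa> / \<epsilon>"
    using SmM unfolding M_def fair_sets_def by auto
  have mk: "real m \<le> real \<kappa> / \<epsilon>"
  proof -
    have "m = card (set xs)" using dist by (simp add: m_def distinct_card)
    also have "\<dots> = (\<Sum>c<N. card (set xs \<inter> Uc c))" by (rule card_partition[OF part fin setU])
    finally have "real m = (\<Sum>c<N. real (card (set xs \<inter> Uc c)))" by simp
    also have "\<dots> \<le> (\<Sum>c<N. max (real (card (set xs \<inter> Uc c))) (real (l c) / \<epsilon>))"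
      by (rule sum_mono) simp
    finally show ?thesis using feas2 by linarith
  qed
  have q1: "greedy_queries U xs \<le> m * (card U + 1)"
  proof -
    have "greedy_queries U xs = (\<Sum>i<m. card (U - set (take i xs)) + 1)"
      by (simp add: greedy_queries_def m_def)
    also have "\<dots> \<le> (\<Sum>i<m. card U + 1)"
      by (rule sum_mono) (use fin in \<open>auto intro: card_mono\<close>)
    finally show ?thesis by simp
  qed
  have queries: "real (greedy_queries U xs) \<le> 2 * real (card U) * real \<kappa> / \<epsilon>"
  proof (cases "m = 0")
    case True
    then show ?thesis using q1 eps by simp
  next
    case False
    then have "xs \<noteq> []" by (simp add: m_def)
    then have "U \<noteq> {}" using setU by auto
    then have n1: "card U \<ge> 1" using fin by (simp add: Suc_le_eq card_gt_0_iff)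
    have "real (greedy_queries U xs) \<le> real m * (real (card U) + 1)"
      using q1 by (metis of_nat_1 of_nat_add of_nat_le_iff of_nat_mult)
    also have "\<dots> \<le> real m * (2 * real (card U))" using n1 by (intro mult_left_mono) auto
    also have "\<dots> \<le> (real \<kappa> / \<epsilon>) * (2 * real (card U))" using mk by (intro mult_right_mono) auto
    also have "\<dots> = 2 * real (card U) * real \<kappa> / \<epsilon>" by simp
    finally show ?thesis .
  qed
  have approx: "f (set xs) \<ge> (1 - \<epsilon>) * f T" if T: "T \<in> M0" for T
  proof -
    have TU: "T \<subseteq> U" using T unfolding M0_def fair_sets_def by auto
    have finT: "finite T" using TU fin finite_subset by blast
    define Bs where "Bs = T - set xs"
    have finB: "finite Bs" using finT by (simp add: Bs_def)
    have blk: "insert z (S m) \<notin> M" if "z \<in> Bs" for z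
    proof -
      have "z \<in> U - set xs" using that TU unfolding Bs_def by blast
      then have "insert z (set xs) \<notin> M" using g2 by blast
      then show ?thesis using Sm by simp
    qed
    define \<tau> where "\<tau> z = (LEAST t. insert z (S t) \<notin> M)" for z
    have \<tau>m: "\<tau> z \<le> m" if "z \<in> Bs" for z
      unfolding \<tau>_def using blk[OF that] by (rule Least_le)
    have \<tau>blk: "insert z (S (\<tau> z)) \<notin> M" if "z \<in> Bs" for z
      unfolding \<tau>_def using blk[OF that] by (rule LeastI)
    have \<tau>ok: "insert z (S t) \<in> M" if "z \<in> Bs" "t < \<tau> z" for z t
      using not_less_Least[OF that(2)[unfolded \<tau>_def]] by simp
    define r where "r = 1 / \<epsilon> - 1"
    have r0: "r > 0" using eps by (simp add: r_def)
    have cnt: "\<forall>t\<le>m. r * card {z\<in>Bs. \<tau> z \<le> t} \<le> t"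
    proof (intro allI impI)
      fix t assume t: "t \<le> m"
      have sub: "{z\<in>Bs. \<tau> z \<le> t} \<subseteq> T - S t" using Smono[of t m] t Sm unfolding Bs_def by auto
      have nb: "\<forall>z\<in>{z\<in>Bs. \<tau> z \<le> t}. insert z (S t) \<notin> M"
      proof
        fix z assume z: "z \<in> {z\<in>Bs. \<tau> z \<le> t}"
        show "insert z (S t) \<notin> M"
        proof
          assume "insert z (S t) \<in> M"
          moreover have "insert z (S (\<tau> z)) \<subseteq> insert z (S t)" using Smono[of "\<tau> z" t] z by auto
          ultimately have "insert z (S (\<tau> z)) \<in> M" unfolding M_def by (rule fair_sets_mono[OF _ _ fin])
          then show False using \<tau>blk z by auto
        qed
      qed
      have SMt: "S t \<in> fair_sets U N Uc (real \<kappa> / \<epsilon>) (\<lambda>c. real (l c) / \<epsilon>) (\<lambda>c. real (u c) / \<epsilon>)"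
        using SM[OF t] unfolding M_def .
      have TT: "T \<in> fair_sets U N Uc (real \<kappa>) (\<lambda>c. real (l c)) (\<lambda>c. real (u c))"
        using T unfolding M0_def .
      have nb': "\<forall>z\<in>{z\<in>Bs. \<tau> z \<le> t}. insert z (S t) \<notin> fair_sets U N Uc (real \<kappa> / \<epsilon>) (\<lambda>c. real (l c) / \<epsilon>) (\<lambda>c. real (u c) / \<epsilon>)"
        using nb unfolding M_def .
      have "(1 / \<epsilon> - 1) * card {z\<in>Bs. \<tau> z \<le> t} \<le> card (S t)"
        by (rule count_blocked[OF part fin eps SMt TT sub nb'])
      then show "r * card {z\<in>Bs. \<tau> z \<le> t} \<le> t" using cardS[OF t] by (simp add: r_def)
    qed
    have \<tau>1: "\<forall>z\<in>Bs. 1 \<le> \<tau> z \<and> \<tau> z \<le> m"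
    proof
      fix z assume zB: "z \<in> Bs"
      have "\<tau> z \<noteq> 0"
      proof
        assume z0: "\<tau> z = 0"
        have "z \<in> {z\<in>Bs. \<tau> z \<le> 0}" using zB z0 by simp
        then have ne0: "{z\<in>Bs. \<tau> z \<le> 0} \<noteq> {}" by blast
        have "finite {z\<in>Bs. \<tau> z \<le> 0}" using finB by simp
        then have "card {z\<in>Bs. \<tau> z \<le> 0} > 0" using ne0 by (simp add: card_gt_0_iff)
        then have c1: "real (card {z\<in>Bs. \<tau> z \<le> 0}) \<ge> 1" by simp
        have "r * card {z\<in>Bs. \<tau> z \<le> 0} \<le> 0" using cnt[rule_format, of 0] by simp
        moreover have "r * 1 \<le> r * card {z\<in>Bs. \<tau> z \<le> 0}" using c1 r0 by (intro mult_left_mono) auto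
        ultimately show False using r0 by linarith
      qed
      then show "1 \<le> \<tau> z \<and> \<tau> z \<le> m" using \<tau>m[OF zB] by simp
    qed
    have gain: "f (insert z (S m)) - f (S m) \<le> \<delta> (\<tau> z - 1)" if z: "z \<in> Bs" for z
    proof -
      define i where "i = \<tau> z - 1"
      have i: "i < m" "Suc i = \<tau> z" using \<tau>1 z unfolding i_def by auto
      have ins: "insert z (S i) \<in> M" using \<tau>ok[OF z] i by simp
      have oU: "z \<in> U - S m" using z TU Sm unfolding Bs_def by auto
      have oi: "z \<in> U - S i" using oU Smono[of i m] i by auto
      have gi: "\<forall>y\<in>U - S i. insert y (S i) \<in> M \<longrightarrow>
         f (insert y (S i)) - f (S i) \<le> f (insert (xs ! i) (S i)) - f (S i)"
        using g1 i(1) by blast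
      have "f (insert z (S i)) - f (S i) \<le> f (insert (xs ! i) (S i)) - f (S i)"
        using gi oi ins by blast
      then have "f (insert z (S i)) - f (S i) \<le> \<delta> i"
        unfolding \<delta>_def using Sstep[OF i(1)] by simp
      moreover have "f (insert z (S m)) - f (S m) \<le> f (insert z (S i)) - f (S i)"
        using fsub[of "S i" "S m" z] Smono[of i m] i SU oU by auto
      ultimately show ?thesis unfolding i_def by simp
    qed
    have lc: "r * (\<Sum>z\<in>Bs. \<delta> (\<tau> z - 1)) \<le> (\<Sum>i<m. \<delta> i)"
      by (rule layer_cake[OF finB \<tau>1 \<delta>_anti \<delta>_nn r0 cnt])
    have f0: "f (S 0) \<ge> 0" using fnn S0 by auto
    have "f T \<le> f (S m \<union> T)" using fmono[of T "S m \<union> T"] SU TU by auto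
    also have "\<dots> \<le> f (S m) + (\<Sum>z\<in>T - S m. f (insert z (S m)) - f (S m))"
      by (rule submod_sum[OF ms finT TU SU])
    also have "\<dots> \<le> f (S m) + (\<Sum>z\<in>Bs. \<delta> (\<tau> z - 1))"
    proof -
      have "(\<Sum>z\<in>T - S m. f (insert z (S m)) - f (S m)) \<le> (\<Sum>z\<in>Bs. \<delta> (\<tau> z - 1))"
        unfolding Bs_def Sm[symmetric] by (rule sum_mono) (use gain in \<open>auto simp: Bs_def Sm\<close>)
      then show ?thesis by simp
    qed
    finally have fT: "f T - f (S m) \<le> (\<Sum>z\<in>Bs. \<delta> (\<tau> z - 1))" by simp
    have "r * (f T - f (S m)) \<le> r * (\<Sum>z\<in>Bs. \<delta> (\<tau> z - 1))"
      using fT r0 by (intro mult_left_mono) auto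
    also have "\<dots> \<le> f (S m)" using lc telesc f0 by linarith
    finally have "r * (f T - f (S m)) \<le> f (S m)" .
    then have "\<epsilon> * (r * (f T - f (S m))) \<le> \<epsilon> * f (S m)" using eps by (intro mult_left_mono) auto
    moreover have "\<epsilon> * r = 1 - \<epsilon>" using eps by (simp add: r_def field_simps)
    ultimately have "(1 - \<epsilon>) * (f T - f (S m)) \<le> \<epsilon> * f (S m)" by (metis mult.assoc)
    then have "(1 - \<epsilon>) * f T \<le> f (S m)" by (simp add: algebra_simps)
    then show ?thesis using Sm by simp
  qed
  have A1: "\<forall>T \<in> fair_sets U N Uc (real \<kappa>) (\<lambda>c. real (l c)) (\<lambda>c. real (u c)).
           f (set xs) \<ge> (1 - \<epsilon>) * f T"
    using approx unfolding M0_def by blast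
  show ?thesis by (intro conjI A1 feas1 feas2 queries)
qed

theorem theorem3:
  shows "\<exists>C::real. \<forall>(U::'a set) N Uc (\<kappa>::nat) (l::nat \<Rightarrow> nat) (u::nat \<Rightarrow> nat)
            (f::'a set \<Rightarrow> real) (\<epsilon>::real) xs.
     finite U \<and> is_partition U N Uc \<and> monotone_submodular U f \<and>
     (\<forall>S\<subseteq>U. f S \<ge> 0) \<and>
     (\<Sum>c<N. u c) \<ge> \<kappa> \<and>
     fair_sets U N Uc (real \<kappa>) (\<lambda>c. real (l c)) (\<lambda>c. real (u c)) \<noteq> {} \<and>
     0 < \<epsilon> \<and> \<epsilon> < 1 \<and>
     greedy_run U (fair_sets U N Uc (real \<kappa> / \<epsilon>) (\<lambda>c. real (l c) / \<epsilon>) (\<lambda>c. real (u c) / \<epsilon>)) f xs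
     \<longrightarrow>
       (\<forall>T \<in> fair_sets U N Uc (real \<kappa>) (\<lambda>c. real (l c)) (\<lambda>c. real (u c)).
           f (set xs) \<ge> (1 - \<epsilon>) * f T) \<and>
       (\<forall>c<N. real (card (set xs \<inter> Uc c)) \<le> real (u c) / \<epsilon>) \<and>
       (\<Sum>c<N. max (real (card (set xs \<inter> Uc c))) (real (l c) / \<epsilon>)) \<le> real \<kappa> / \<epsilon> \<and>
       real (greedy_queries U xs) \<le> C * real (card U) * real \<kappa> / \<epsilon>"
    apply (rule exI[of _ 2])
  apply (intro allI impI)
  apply (elim conjE)
  apply (rule main_lemma)
          apply assumption+
  done

end
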